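(* Assume $0\in\bar\Lambda$. For all $1\le\lambda<\infty$, $0<t\le T$ and $y\in\Lambda$, $$\int_{\mathbb{R}}|\phi_t(y,\eta)-G^\lambda_t(y,\eta)|\,d\eta\le2P_y(\tau_\lambda\le t),\qquad\int_{\mathbb{R}}(\phi_t(y,\eta)-G^\lambda_t(y,\eta))^2\,d\eta\le Ct^{-1/2}P_y(\tau_\lambda\le t),$$ with a constant $0<C<\infty$ depending only on $T$.
   Context: $\bar\Lambda\subset\mathbb{R}$ is an open interval of length 1, $\Lambda=\lambda\bar\Lambda$, $T>0$. $G^\lambda_t(y,\eta)$ is the Neumann heat kernel on $\Lambda$ (heat equation $\partial_tu=\partial_y^2u$), extended by zero to $\mathbb{R}\times\mathbb{R}$. $\phi_t(y,\eta)=(4\pi t)^{-1/2}\exp(-(y-\eta)^2/(4t))$ is the heat kernel on $\mathbb{R}$. For a standard Brownian motion $(B_t)$, $\tau_\lambda=\inf\{t\ge0:B_{2t}\notin\lambda\bar\Lambda\}$, and $P_y$ denotes probability when $B_0=y$. *)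

theory Defs
  imports "HOL-Probability.Probability"
begin

text \<open>The reference interval scaled by lam: if the unit interval is the open interval
  with left endpoint alpha, then the scaled interval is (lam*alpha, lam*alpha + lam).\<close>
definition scaled_interval :: "real \<Rightarrow> real \<Rightarrow> real set" where
  "scaled_interval alpha lam = {lam * alpha <..< lam * alpha + lam}"

text \<open>Heat kernel on the real line for u_t = u_yy.\<close>
definition heat_kernel_R :: "real \<Rightarrow> real \<Rightarrow> real \<Rightarrow> real" where
  "heat_kernel_R t y \<eta> = exp (- ((y - \<eta>)^2) / (4 * t)) / sqrt (4 * pi * t)"

text \<open>Neumann heat kernel (eigenfunction expansion) for u_t = u_yy on the open interval
  (a, a+L), extended by zero outside (a,a+L) x (a,a+L).\<close>
definition neumann_kernel :: "real \<Rightarrow> real \<Rightarrow> real \<Rightarrow> real \<Rightarrow> real \<Rightarrow> real" where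
  "neumann_kernel a L t y \<eta> =
     (if y \<in> {a<..<a+L} \<and> \<eta> \<in> {a<..<a+L} then
        1 / L + (2 / L) * (\<Sum>n. exp (- ((real (Suc n))^2 * pi^2 * t / L^2))
                 * cos (real (Suc n) * pi * (y - a) / L) * cos (real (Suc n) * pi * (\<eta> - a) / L))
      else 0)"

definition std_brownian_motion :: "'a measure \<Rightarrow> (real \<Rightarrow> 'a \<Rightarrow> real) \<Rightarrow> bool" where
  "std_brownian_motion M B \<longleftrightarrow>
     prob_space M \<and>
     (\<forall>t. B t \<in> borel_measurable M) \<and>
     (\<forall>\<omega>\<in>space M. B 0 \<omega> = 0 \<and> continuous_on {0..} (\<lambda>t. B t \<omega>)) \<and>
     (\<forall>s t. 0 \<le> s \<and> s < t \<longrightarrow>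
        distributed M lborel (\<lambda>\<omega>. B t \<omega> - B s \<omega>) (normal_density 0 (sqrt (t - s)))) \<and>
     (\<forall>ts :: nat \<Rightarrow> real. \<forall>n. 0 \<le> ts 0 \<and> (\<forall>i<n. ts i < ts (Suc i)) \<longrightarrow>
        prob_space.indep_vars M (\<lambda>_. borel) (\<lambda>i \<omega>. B (ts (Suc i)) \<omega> - B (ts i) \<omega>) {..<n})"

text \<open>Exit time tau = inf{t >= 0 : y + B(2t) not in the interval} (infinite if never).\<close>
definition exit_time :: "real set \<Rightarrow> (real \<Rightarrow> 'a \<Rightarrow> real) \<Rightarrow> real \<Rightarrow> 'a \<Rightarrow> ereal" where
  "exit_time I B y \<omega> = Inf {ereal s | s. 0 \<le> s \<and> y + B (2 * s) \<omega> \<notin> I}"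

end

theory Submission
  imports Defs
begin

lemma cos_int_integral:
  fixes L :: real and k :: int
  assumes L: "L > 0"
  shows "(LINT x|lborel. cos (real_of_int k * pi * x / L) * indicator {0..L} x) = (if k = 0 then L else 0)"
proof (cases "k = 0")
  case True
  then show ?thesis using L by simp
next
  case False
  have kp: "real_of_int k * pi \<noteq> 0" using False by simp
  have "(LINT x|lborel. indicator {0..L} x *\<^sub>R cos (real_of_int k * pi * x / L))
        = L / (real_of_int k * pi) * sin (real_of_int k * pi * L / L) - L / (real_of_int k * pi) * sin (real_of_int k * pi * 0 / L)"
  proof (rule integral_FTC_atLeastAtMost)
    show "0 \<le> L" using L by simp
    fix x assume "0 \<le> x" "x \<le> L"
    have "((\<lambda>x. L / (real_of_int k * pi) * sin (real_of_int k * pi * x / L)) has_real_derivative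
           L / (real_of_int k * pi) * (cos (real_of_int k * pi * x / L) * (real_of_int k * pi / L))) (at x within {0..L})"
      by (auto intro!: derivative_eq_intros)
    moreover have "L / (real_of_int k * pi) * (cos (real_of_int k * pi * x / L) * (real_of_int k * pi / L)) = cos (real_of_int k * pi * x / L)"
      using kp L by (simp add: field_simps)
    ultimately show "((\<lambda>x. L / (real_of_int k * pi) * sin (real_of_int k * pi * x / L)) has_vector_derivative cos (real_of_int k * pi * x / L)) (at x within {0..L})"
      by (simp add: has_real_derivative_iff_has_vector_derivative)
  next
    show "continuous_on {0..L} (\<lambda>x. cos (real_of_int k * pi * x / L))"
      using L by (intro continuous_intros) auto
  qed
  moreover have "sin (real_of_int k * pi * L / L) = 0"
    using L by (simp add: sin_times_pi_eq_0)
  ultimately show ?thesis using False by (simp add: mult.commute)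
qed

lemma cos_orth:
  fixes L :: real and m n :: nat
  assumes L: "L > 0"
  shows "(LINT x|lborel. (cos (real m * pi * x / L) * cos (real n * pi * x / L)) * indicator {0..L} x)
     = (if m = n then (if m = 0 then L else L / 2) else 0)"
proof -
  have eq: "(cos (real m * pi * x / L) * cos (real n * pi * x / L)) * indicator {0..L} x
     = (cos (real_of_int (int m - int n) * pi * x / L) * indicator {0..L} x) / 2
       + (cos (real_of_int (int m + int n) * pi * x / L) * indicator {0..L} x) / 2" for x
  proof -
    have "cos (real m * pi * x / L) * cos (real n * pi * x / L)
        = (cos (real m * pi * x / L - real n * pi * x / L) + cos (real m * pi * x / L + real n * pi * x / L)) / 2"
      by (simp add: cos_diff cos_add)
    also have "real m * pi * x / L - real n * pi * x / L = real_of_int (int m - int n) * pi * x / L"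
      using L by (simp add: field_simps)
    also have "real m * pi * x / L + real n * pi * x / L = real_of_int (int m + int n) * pi * x / L"
      using L by (simp add: field_simps)
    finally have h: "cos (real m * pi * x / L) * cos (real n * pi * x / L) = (cos (real_of_int (int m - int n) * pi * x / L) + cos (real_of_int (int m + int n) * pi * x / L)) / 2" .
    show ?thesis by (subst h) (simp add: add_divide_distrib distrib_right del: of_int_diff of_int_add)
  qed
  have i1: "integrable lborel (\<lambda>x. cos (real_of_int k * pi * x / L) * indicator {0..L} x)" for k :: int
    using L by (intro borel_integrable_atLeastAtMost continuous_intros) auto
  show ?thesis
    unfolding eq
    using L by (simp add: i1 cos_int_integral del: of_int_diff of_int_add)
qed

definition ec :: "real \<Rightarrow> real \<Rightarrow> nat \<Rightarrow> real" where
  "ec L t n = exp (- ((real n)^2 * pi^2 * t / L^2))"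

definition gt :: "real \<Rightarrow> real \<Rightarrow> real \<Rightarrow> nat \<Rightarrow> real \<Rightarrow> real" where
  "gt L t u n x = exp (- ((real (Suc n))^2 * pi^2 * t / L^2))
                 * cos (real (Suc n) * pi * u / L) * cos (real (Suc n) * pi * x / L)"

definition Gs :: "real \<Rightarrow> real \<Rightarrow> real \<Rightarrow> real \<Rightarrow> real" where
  "Gs L t u x = 1 / L + (2 / L) * (\<Sum>n. gt L t u n x)"

lemma ec_pos: "ec L t n > 0" by (simp add: ec_def)

lemma summable_ec:
  assumes L: "L > 0" and t: "t > 0"
  shows "summable (\<lambda>n. ec L t (Suc n))"
proof -
  define c where "c = pi^2 * t / L^2"
  have c: "c > 0" using L t by (simp add: c_def)
  have "summable (\<lambda>n. exp (- c) ^ n)"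
    by (rule summable_geometric) (use c in simp)
  moreover have "norm (ec L t (Suc n)) \<le> exp (- c) ^ n" for n
  proof -
    have "exp (- c) ^ n = exp (- (c * real n))"
      by (simp add: exp_of_nat_mult[symmetric] mult.commute)
    moreover have "c * real n \<le> (real (Suc n))^2 * c"
    proof -
      have "real n \<le> (real (Suc n))^2"
        using mult_nonneg_nonneg[of "real n" "real n"] by (simp add: power2_eq_square algebra_simps)
      then show ?thesis using c by (simp add: mult.commute)
    qed
    ultimately show ?thesis
      by (simp add: ec_def c_def)
  qed
  ultimately show ?thesis
    by (rule summable_comparison_test'[where N=0])
qed

lemma gt_bound: "\<bar>gt L t u n x\<bar> \<le> ec L t (Suc n)"
proof -
  have "\<bar>cos (real (Suc n) * pi * u / L) * cos (real (Suc n) * pi * x / L)\<bar> \<le> 1"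
    by (simp add: abs_mult mult_le_one)
  then show ?thesis
    unfolding gt_def ec_def
    by (simp add: abs_mult mult.assoc mult_le_cancel_left1)
qed

lemma summable_gt:
  assumes L: "L > 0" and t: "t > 0"
  shows "summable (\<lambda>n. gt L t u n x)" "summable (\<lambda>n. \<bar>gt L t u n x\<bar>)"
  using summable_comparison_test'[OF summable_ec[OF L t], of 0 "\<lambda>n. gt L t u n x"] gt_bound
    summable_comparison_test'[OF summable_ec[OF L t], of 0 "\<lambda>n. \<bar>gt L t u n x\<bar>"]
  by auto

lemma continuous_Gs:
  assumes L: "L > 0" and t: "t > 0"
  shows "continuous_on UNIV (Gs L t u)"
proof -
  have ul: "uniform_limit UNIV (\<lambda>n x. \<Sum>i<n. gt L t u i x) (\<lambda>x. \<Sum>i. gt L t u i x) sequentially"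
    by (rule Weierstrass_m_test[OF _ summable_ec[OF L t]]) (simp add: gt_bound)
  have "continuous_on UNIV (\<lambda>x. \<Sum>i. gt L t u i x)"
  proof (rule uniform_limit_theorem[OF _ ul])
    show "\<forall>\<^sub>F n in sequentially. continuous_on UNIV (\<lambda>x. \<Sum>i<n. gt L t u i x)"
      unfolding gt_def using L by (intro always_eventually allI continuous_intros) auto
  qed simp
  then show ?thesis unfolding Gs_def[abs_def] by (intro continuous_intros)
qed

lemma Gs_bound:
  assumes L: "L > 0" and t: "t > 0"
  shows "\<bar>Gs L t u x\<bar> \<le> 1 / L + 2 / L * (\<Sum>n. ec L t (Suc n))"
proof -
  have "\<bar>\<Sum>n. gt L t u n x\<bar> \<le> (\<Sum>n. \<bar>gt L t u n x\<bar>)"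
    by (rule summable_rabs[OF summable_gt(2)[OF L t]])
  also have "\<dots> \<le> (\<Sum>n. ec L t (Suc n))"
    by (intro suminf_le summable_gt[OF L t] summable_ec[OF L t] gt_bound)
  finally have "\<bar>\<Sum>n. gt L t u n x\<bar> \<le> (\<Sum>n. ec L t (Suc n))" .
  then have "\<bar>2 / L * (\<Sum>n. gt L t u n x)\<bar> \<le> 2 / L * (\<Sum>n. ec L t (Suc n))"
    using L by (simp add: abs_mult divide_right_mono)
  then show ?thesis unfolding Gs_def using L by (simp add: abs_triangle_ineq order_trans[OF abs_triangle_ineq])
qed

lemma Gs_coeff:
  assumes L: "L > 0" and t: "t > 0"
  shows "(LINT x|lborel. Gs L t u x * cos (real m * pi * x / L) * indicator {0..L} x)
         = ec L t m * cos (real m * pi * u / L)"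
proof -
  define f where "f n x = gt L t u n x * (cos (real m * pi * x / L) * indicator {0..L} x)" for n x
  have eq: "Gs L t u x * cos (real m * pi * x / L) * indicator {0..L} x
     = 1 / L * (cos (real 0 * pi * x / L) * cos (real m * pi * x / L) * indicator {0..L} x)
       + 2 / L * (\<Sum>n. f n x)" for x
  proof -
    have "(\<Sum>n. gt L t u n x) * (cos (real m * pi * x / L) * indicator {0..L} x) = (\<Sum>n. f n x)"
      unfolding f_def by (rule suminf_mult2[OF summable_gt(1)[OF L t]])
    then show ?thesis unfolding Gs_def by (simp add: algebra_simps)
  qed
  have intf: "integrable lborel (f n)" for n
  proof -
    have "integrable lborel (\<lambda>x. (gt L t u n x * cos (real m * pi * x / L)) * indicator {0..L} x)"
      by (intro borel_integrable_atLeastAtMost) (unfold gt_def, use L in \<open>auto intro!: continuous_intros\<close>)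
    then show ?thesis unfolding f_def[abs_def] by (simp add: mult.assoc)
  qed
  have fint: "(LINT x|lborel. f n x) = ec L t (Suc n) * cos (real (Suc n) * pi * u / L) * (if Suc n = m then L / 2 else 0)" for n
  proof -
    have "(LINT x|lborel. f n x) = (LINT x|lborel. (ec L t (Suc n) * cos (real (Suc n) * pi * u / L)) *
           ((cos (real (Suc n) * pi * x / L) * cos (real m * pi * x / L)) * indicator {0..L} x))"
      unfolding f_def gt_def ec_def by (simp add: algebra_simps)
    also have "\<dots> = (ec L t (Suc n) * cos (real (Suc n) * pi * u / L)) * (if Suc n = m then L / 2 else 0)"
      by (subst integral_mult_right_zero, subst cos_orth[OF L]) simp
    finally show ?thesis by simp
  qed
  have absint: "(LINT x|lborel. norm (f n x)) \<le> ec L t (Suc n) * L" for n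
  proof -
    have "(LINT x|lborel. norm (f n x)) \<le> (LINT x|lborel. ec L t (Suc n) * indicator {0..L} x)"
    proof (rule integral_mono)
      show "integrable lborel (\<lambda>x. norm (f n x))" using intf by auto
      show "integrable lborel (\<lambda>x. ec L t (Suc n) * indicator {0..L} x)"
        using L by (intro integrable_mult_right integrable_real_indicator) (auto simp: emeasure_lborel_Icc)
      fix x
      have "\<bar>gt L t u n x * cos (real m * pi * x / L)\<bar> \<le> ec L t (Suc n) * 1"
        unfolding abs_mult by (intro mult_mono gt_bound) (auto simp: ec_def)
      then show "norm (f n x) \<le> ec L t (Suc n) * indicator {0..L} x"
        unfolding f_def by (auto simp: indicator_def abs_mult)
    qed
    also have "\<dots> = ec L t (Suc n) * L" using L by simp
    finally show ?thesis .
  qed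
  have sabs: "summable (\<lambda>n. LINT x|lborel. norm (f n x))"
    by (rule summable_comparison_test'[where N=0, OF summable_mult2[OF summable_ec[OF L t], of L]])
       (use absint in \<open>auto\<close>)
  have sumf: "AE x in lborel. summable (\<lambda>n. norm (f n x))"
  proof (intro AE_I2)
    fix x
    have "norm (f n x) \<le> ec L t (Suc n)" for n
    proof -
      have "\<bar>gt L t u n x * cos (real m * pi * x / L)\<bar> \<le> ec L t (Suc n) * 1"
        unfolding abs_mult by (intro mult_mono gt_bound) (auto simp: ec_def)
      then show ?thesis unfolding f_def by (auto simp: indicator_def abs_mult less_imp_le[OF ec_pos])
    qed
    then show "summable (\<lambda>n. norm (f n x))"
      by (intro summable_comparison_test'[where N=0, OF summable_ec[OF L t]]) auto
  qed
  have "(LINT x|lborel. (\<Sum>n. f n x)) = (\<Sum>n. LINT x|lborel. f n x)"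
    by (rule integral_suminf[OF intf sumf sabs])
  also have "\<dots> = (if m = 0 then 0 else ec L t m * cos (real m * pi * u / L) * (L / 2))"
  proof (cases m)
    case 0 then show ?thesis by (simp add: fint)
  next
    case (Suc k)
    have "(\<lambda>n. LINT x|lborel. f n x) = (\<lambda>n. if n = k then ec L t (Suc n) * cos (real (Suc n) * pi * u / L) * (L / 2) else 0)"
      by (auto simp: fint Suc)
    then have "(\<lambda>n. LINT x|lborel. f n x) sums (ec L t (Suc k) * cos (real (Suc k) * pi * u / L) * (L / 2))"
      using sums_single[of k "\<lambda>n. ec L t (Suc n) * cos (real (Suc n) * pi * u / L) * (L / 2)"] by simp
    then show ?thesis using Suc by (simp add: sums_iff)
  qed
  finally have I2: "(LINT x|lborel. (\<Sum>n. f n x)) = (if m = 0 then 0 else ec L t m * cos (real m * pi * u / L) * (L / 2))" .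
  have i1: "integrable lborel (\<lambda>x. cos (real 0 * pi * x / L) * cos (real m * pi * x / L) * indicator {0..L} x)"
    using L by (intro borel_integrable_atLeastAtMost continuous_intros) auto
  have i2: "integrable lborel (\<lambda>x. (\<Sum>n. f n x))"
    by (rule integrable_suminf[OF intf sumf sabs])
  have lin: "(LINT x|lborel. 1 / L * (cos (real 0 * pi * x / L) * cos (real m * pi * x / L) * indicator {0..L} x)
       + 2 / L * (\<Sum>n. f n x)) = 1 / L * (LINT x|lborel. cos (real 0 * pi * x / L) * cos (real m * pi * x / L) * indicator {0..L} x)
       + 2 / L * (LINT x|lborel. (\<Sum>n. f n x))"
    by (simp only: Bochner_Integration.integral_add[OF integrable_mult_right[OF i1] integrable_mult_right[OF i2]] integral_mult_right_zero)
  show ?thesis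
    unfolding eq lin cos_orth[OF L] I2
    using L by (simp add: ec_def)
qed

lemma std_cos: "(LINT x|lborel. std_normal_density x * cos (w * x)) = exp (-(w^2)/2)"
proof -
  interpret real_distribution std_normal_distribution by (rule real_dist_normal_dist)
  have ci: "complex_integrable std_normal_distribution (\<lambda>x. iexp (w * x))"
    by (rule integrable_const_bound[where B=1]) auto
  have "exp (-(w^2)/2) = Re (char std_normal_distribution w)"
    by (simp add: char_std_normal_distribution)
  also have "\<dots> = (LINT x|std_normal_distribution. Re (iexp (w * x)))"
    unfolding char_def by (rule integral_Re[OF ci, symmetric])
  also have "\<dots> = (LINT x|std_normal_distribution. cos (w * x))"
    by (simp add: Re_exp)
  also have "\<dots> = (LINT x|lborel. std_normal_density x * cos (w * x))"
    by (subst integral_density) (auto simp: normal_density_nonneg)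
  finally show ?thesis by simp
qed

lemma std_sin: "(LINT x|lborel. std_normal_density x * sin (w * x)) = 0"
proof -
  let ?f = "\<lambda>x. std_normal_density x * sin (w * x)"
  have "integral\<^sup>L lborel ?f = \<bar>-1\<bar> *\<^sub>R (LINT x|lborel. ?f (0 + (-1) * x))"
    by (rule lborel_integral_real_affine) simp
  also have "\<dots> = - integral\<^sup>L lborel ?f"
    by (simp add: normal_density_def)
  finally show ?thesis by simp
qed

lemma hk_normal: "t > 0 \<Longrightarrow> heat_kernel_R t 0 z = normal_density 0 (sqrt (2 * t)) z"
  unfolding heat_kernel_R_def normal_density_def
  by (simp add: real_sqrt_mult field_simps)

lemma hk_std: "t > 0 \<Longrightarrow> heat_kernel_R t 0 (sqrt (2 * t) * x) = std_normal_density x / sqrt (2 * t)"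
  unfolding heat_kernel_R_def normal_density_def
  by (simp add: real_sqrt_mult field_simps power_mult_distrib)

lemma hk_nonneg: "heat_kernel_R t y z \<ge> 0 \<or> t < 0"
  unfolding heat_kernel_R_def by auto

lemma hk_cos:
  assumes t: "t > 0"
  shows "(LINT z|lborel. heat_kernel_R t 0 z * cos (w * (u + z))) = exp (- (w^2 * t)) * cos (w * u)"
proof -
  define s where "s = sqrt (2 * t)"
  have s: "s > 0" using t by (simp add: s_def)
  have ss: "s^2 = 2 * t" using t by (simp add: s_def)
  have "(LINT z|lborel. heat_kernel_R t 0 z * cos (w * (u + z)))
      = \<bar>s\<bar> *\<^sub>R (LINT x|lborel. heat_kernel_R t 0 (0 + s * x) * cos (w * (u + (0 + s * x))))"
    by (rule lborel_integral_real_affine) (use s in simp)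
  also have "\<dots> = (LINT x|lborel. cos (w * u) * (std_normal_density x * cos ((w * s) * x))
                     - sin (w * u) * (std_normal_density x * sin ((w * s) * x)))"
  proof -
    have "s * (heat_kernel_R t 0 (s * x) * cos (w * (u + s * x)))
        = cos (w * u) * (std_normal_density x * cos ((w * s) * x))
                     - sin (w * u) * (std_normal_density x * sin ((w * s) * x))" for x
    proof -
      have "s * heat_kernel_R t 0 (s * x) = std_normal_density x"
        using hk_std[OF t, of x] s unfolding s_def by simp
      moreover have "cos (w * (u + s * x)) = cos (w * u) * cos ((w * s) * x) - sin (w * u) * sin ((w * s) * x)"
        by (simp add: distrib_left cos_add mult.assoc mult.left_commute)
      ultimately have "(s * heat_kernel_R t 0 (s * x)) * cos (w * (u + s * x)) = std_normal_density x * (cos (w * u) * cos ((w * s) * x) - sin (w * u) * sin ((w * s) * x))"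
        by simp
      then show ?thesis by (simp only: mult.assoc right_diff_distrib mult.left_commute[of "std_normal_density x"])
    qed
    moreover have "\<bar>s\<bar> *\<^sub>R (LINT x|lborel. heat_kernel_R t 0 (0 + s * x) * cos (w * (u + (0 + s * x))))
       = (LINT x|lborel. s * (heat_kernel_R t 0 (s * x) * cos (w * (u + s * x))))"
      using s by simp
    ultimately show ?thesis by simp
  qed
  also have "\<dots> = cos (w * u) * exp (- ((w * s)^2) / 2)"
  proof -
    have i1: "integrable lborel (\<lambda>x. std_normal_density x * cos ((w * s) * x))"
      by (rule Bochner_Integration.integrable_bound[where f="std_normal_density"]) (auto simp: abs_mult normal_density_nonneg intro!: AE_I2 mult_left_le)
    have i2: "integrable lborel (\<lambda>x. std_normal_density x * sin ((w * s) * x))"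
      by (rule Bochner_Integration.integrable_bound[where f="std_normal_density"]) (auto simp: abs_mult normal_density_nonneg intro!: AE_I2 mult_left_le)
    show ?thesis
      by (simp add: i1 i2 std_cos std_sin)
  qed
  also have "\<dots> = exp (- (w^2 * t)) * cos (w * u)"
    using ss by (simp add: power_mult_distrib)
  finally show ?thesis .
qed

lemma hk_int:
  assumes t: "t > 0" and f: "continuous_on UNIV f" and B: "\<And>z. \<bar>f z\<bar> \<le> B"
  shows "integrable lborel (\<lambda>z. heat_kernel_R t 0 z * f z)"
proof (rule Bochner_Integration.integrable_bound[where f="\<lambda>z. B * heat_kernel_R t 0 z"])
  show "integrable lborel (\<lambda>z. B * heat_kernel_R t 0 z)"
    using t by (simp add: hk_normal)
  show "(\<lambda>z. heat_kernel_R t 0 z * f z) \<in> borel_measurable lborel"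
    using f unfolding heat_kernel_R_def
    by (intro borel_measurable_times borel_measurable_continuous_onI[simplified]) (auto intro!: continuous_intros borel_measurable_continuous_onI)
  have "0 \<le> heat_kernel_R t 0 z" for z using hk_nonneg[of t 0 z] t by auto
  then show "AE z in lborel. norm (heat_kernel_R t 0 z * f z) \<le> norm (B * heat_kernel_R t 0 z)"
    using B by (auto intro!: AE_I2 simp: abs_mult mult.commute mult_right_mono order_trans[OF _ abs_ge_self])
qed

lemma Gs_int:
  assumes L: "L > 0" and t: "t > 0" and f: "continuous_on UNIV f"
  shows "integrable lborel (\<lambda>x. Gs L t u x * f x * indicator {0..L} x)"
proof (rule borel_integrable_atLeastAtMost)
  fix x
  have "continuous_on UNIV (\<lambda>x. Gs L t u x * f x)"
    using continuous_Gs[OF L t] f by (intro continuous_intros)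
  then show "isCont (\<lambda>x. Gs L t u x * f x) x"
    by (simp add: continuous_on_eq_continuous_at)
qed

definition LH :: "real \<Rightarrow> real \<Rightarrow> real \<Rightarrow> nat \<Rightarrow> nat \<Rightarrow> real" where
  "LH L t u k n = (LINT x|lborel. Gs L t u x * (cos (pi * x / L) ^ k * cos (real n * pi * x / L)) * indicator {0..L} x)"

definition RH :: "real \<Rightarrow> real \<Rightarrow> real \<Rightarrow> nat \<Rightarrow> nat \<Rightarrow> real" where
  "RH L t u k n = (LINT z|lborel. heat_kernel_R t 0 z * (cos (pi * (u + z) / L) ^ k * cos (real n * pi * (u + z) / L)))"

lemma cos_step: "cos A * cos (real n * A) = (cos (real (Suc n) * A) + cos (real (if n = 0 then 1 else n - 1) * A)) / 2"
proof (cases n)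
  case 0 then show ?thesis by simp
next
  case (Suc m)
  have "cos (real (Suc n) * A) = cos (real n * A + A)" by (simp add: algebra_simps)
  moreover have "cos (real m * A) = cos (real n * A - A)" using Suc by (simp add: algebra_simps)
  ultimately show ?thesis using Suc by (simp add: cos_add cos_diff)
qed

lemma LH_RH_0:
  assumes L: "L > 0" and t: "t > 0"
  shows "LH L t u 0 n = RH L t u 0 n"
proof -
  have "LH L t u 0 n = ec L t n * cos (real n * pi * u / L)"
    unfolding LH_def using Gs_coeff[OF L t, of u n] by simp
  moreover have "RH L t u 0 n = ec L t n * cos (real n * pi * u / L)"
  proof -
    have "RH L t u 0 n = (LINT z|lborel. heat_kernel_R t 0 z * cos ((real n * pi / L) * (u + z)))"
      unfolding RH_def by (simp add: mult.assoc)
    also have "\<dots> = exp (- ((real n * pi / L)^2 * t)) * cos ((real n * pi / L) * u)"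
      by (rule hk_cos[OF t])
    also have "\<dots> = ec L t n * cos (real n * pi * u / L)"
      unfolding ec_def by (simp add: power_divide power_mult_distrib)
    finally show ?thesis .
  qed
  ultimately show ?thesis by simp
qed

lemma half_sum_integral:
  fixes f g :: "'a \<Rightarrow> real"
  assumes "integrable M f" "integrable M g"
  shows "(LINT x|M. (f x + g x) / 2) = ((LINT x|M. f x) + (LINT x|M. g x)) / 2"
  using assms by simp

lemma LH_step:
  assumes L: "L > 0" and t: "t > 0"
  shows "LH L t u (Suc k) n = (LH L t u k (Suc n) + LH L t u k (if n = 0 then 1 else n - 1)) / 2"
proof -
  define n' where "n' = (if n = 0 then 1 else n - 1)"
  have eq: "Gs L t u x * (cos (pi * x / L) ^ Suc k * cos (real n * pi * x / L)) * indicator {0..L} x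
    = (Gs L t u x * (cos (pi * x / L) ^ k * cos (real (Suc n) * pi * x / L)) * indicator {0..L} x
       + Gs L t u x * (cos (pi * x / L) ^ k * cos (real n' * pi * x / L)) * indicator {0..L} x) / 2" for x
  proof -
    have r: "real j * pi * x / L = real j * (pi * x / L)" for j by simp
    have "cos (pi * x / L) * cos (real n * (pi * x / L)) = (cos (real (Suc n) * (pi * x / L)) + cos (real n' * (pi * x / L))) / 2"
      unfolding n'_def by (rule cos_step)
    then have "cos (pi * x / L) ^ Suc k * cos (real n * pi * x / L)
       = cos (pi * x / L) ^ k * ((cos (real (Suc n) * pi * x / L) + cos (real n' * pi * x / L)) / 2)"
      unfolding r by (simp only: power_Suc mult.assoc mult.commute[of "cos (pi * x / L)"])
    then show ?thesis by (simp only: add_divide_distrib distrib_left distrib_right mult.assoc times_divide_eq_right times_divide_eq_left)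
  qed
  have i: "integrable lborel (\<lambda>x. Gs L t u x * (cos (pi * x / L) ^ k * cos (real j * pi * x / L)) * indicator {0..L} x)" for j
    by (rule Gs_int[OF L t]) (intro continuous_intros, use L in auto)
  show ?thesis
    unfolding LH_def eq n'_def[symmetric]
    by (rule half_sum_integral[OF i i])
qed

lemma RH_step:
  assumes L: "L > 0" and t: "t > 0"
  shows "RH L t u (Suc k) n = (RH L t u k (Suc n) + RH L t u k (if n = 0 then 1 else n - 1)) / 2"
proof -
  define n' where "n' = (if n = 0 then 1 else n - 1)"
  have eq: "heat_kernel_R t 0 z * (cos (pi * (u + z) / L) ^ Suc k * cos (real n * pi * (u + z) / L))
    = (heat_kernel_R t 0 z * (cos (pi * (u + z) / L) ^ k * cos (real (Suc n) * pi * (u + z) / L))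
       + heat_kernel_R t 0 z * (cos (pi * (u + z) / L) ^ k * cos (real n' * pi * (u + z) / L))) / 2" for z
  proof -
    have r: "real j * pi * (u + z) / L = real j * (pi * (u + z) / L)" for j by simp
    have "cos (pi * (u + z) / L) * cos (real n * (pi * (u + z) / L)) = (cos (real (Suc n) * (pi * (u + z) / L)) + cos (real n' * (pi * (u + z) / L))) / 2"
      unfolding n'_def by (rule cos_step)
    then have "cos (pi * (u + z) / L) ^ Suc k * cos (real n * pi * (u + z) / L)
       = cos (pi * (u + z) / L) ^ k * ((cos (real (Suc n) * pi * (u + z) / L) + cos (real n' * pi * (u + z) / L)) / 2)"
      unfolding r by (simp only: power_Suc mult.assoc mult.commute[of "cos (pi * (u + z) / L)"])
    then show ?thesis by (simp only: add_divide_distrib distrib_left distrib_right mult.assoc times_divide_eq_right times_divide_eq_left)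
  qed
  have i: "integrable lborel (\<lambda>z. heat_kernel_R t 0 z * (cos (pi * (u + z) / L) ^ k * cos (real j * pi * (u + z) / L)))" for j
  proof (rule hk_int[OF t, where B=1])
    show "continuous_on UNIV (\<lambda>z. cos (pi * (u + z) / L) ^ k * cos (real j * pi * (u + z) / L))"
      using L by (intro continuous_intros) auto
    fix z
    show "\<bar>cos (pi * (u + z) / L) ^ k * cos (real j * pi * (u + z) / L)\<bar> \<le> 1"
      by (simp add: abs_mult power_abs mult_le_one power_le_one)
  qed
  show ?thesis
    unfolding RH_def eq n'_def[symmetric]
    by (rule half_sum_integral[OF i i])
qed

lemma LH_RH:
  assumes L: "L > 0" and t: "t > 0"
  shows "LH L t u k n = RH L t u k n"
proof (induction k arbitrary: n)
  case 0 then show ?case by (rule LH_RH_0[OF L t])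
next
  case (Suc k) then show ?case by (simp only: LH_step[OF L t] RH_step[OF L t])
qed

lemma poly_eq:
  assumes L: "L > 0" and t: "t > 0"
  shows "(LINT x|lborel. Gs L t u x * (\<Sum>i\<le>N. a i * cos (pi * x / L) ^ i) * indicator {0..L} x)
       = (LINT z|lborel. heat_kernel_R t 0 z * (\<Sum>i\<le>N. a i * cos (pi * (u + z) / L) ^ i))"
proof -
  have e1: "Gs L t u x * (\<Sum>i\<le>N. a i * cos (pi * x / L) ^ i) * indicator {0..L} x
     = (\<Sum>i\<le>N. a i * (Gs L t u x * (cos (pi * x / L) ^ i * cos (real 0 * pi * x / L)) * indicator {0..L} x))" for x
    by (simp add: sum_distrib_left sum_distrib_right mult_ac)
  have e2: "heat_kernel_R t 0 z * (\<Sum>i\<le>N. a i * cos (pi * (u + z) / L) ^ i)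
     = (\<Sum>i\<le>N. a i * (heat_kernel_R t 0 z * (cos (pi * (u + z) / L) ^ i * cos (real 0 * pi * (u + z) / L))))" for z
    by (simp add: sum_distrib_left sum_distrib_right mult_ac)
  have i1: "integrable lborel (\<lambda>x. Gs L t u x * (cos (pi * x / L) ^ i * cos (real 0 * pi * x / L)) * indicator {0..L} x)" for i
    by (rule Gs_int[OF L t]) (intro continuous_intros, use L in auto)
  have i2: "integrable lborel (\<lambda>z. heat_kernel_R t 0 z * (cos (pi * (u + z) / L) ^ i * cos (real 0 * pi * (u + z) / L)))" for i
  proof (rule hk_int[OF t, where B=1])
    show "continuous_on UNIV (\<lambda>z. cos (pi * (u + z) / L) ^ i * cos (real 0 * pi * (u + z) / L))"
      using L by (intro continuous_intros) auto
    fix z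
    show "\<bar>cos (pi * (u + z) / L) ^ i * cos (real 0 * pi * (u + z) / L)\<bar> \<le> 1"
      by (simp add: abs_mult power_abs mult_le_one power_le_one)
  qed
  have "(LINT x|lborel. Gs L t u x * (\<Sum>i\<le>N. a i * cos (pi * x / L) ^ i) * indicator {0..L} x)
      = (\<Sum>i\<le>N. a i * LH L t u i 0)"
    unfolding e1 LH_def
    by (simp only: Bochner_Integration.integral_sum[OF integrable_mult_right[OF i1]] integral_mult_right_zero)
  also have "\<dots> = (\<Sum>i\<le>N. a i * RH L t u i 0)"
    by (simp add: LH_RH[OF L t])
  also have "\<dots> = (LINT z|lborel. heat_kernel_R t 0 z * (\<Sum>i\<le>N. a i * cos (pi * (u + z) / L) ^ i))"
    unfolding e2 RH_def
    by (simp only: Bochner_Integration.integral_sum[OF integrable_mult_right[OF i2]] integral_mult_right_zero)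
  finally show ?thesis .
qed

lemma cont_bound:
  fixes h :: "real \<Rightarrow> real"
  assumes "continuous_on {-1..1} h"
  obtains B where "\<And>c. c \<in> {-1..1} \<Longrightarrow> \<bar>h c\<bar> \<le> B"
proof -
  have "bounded (h ` {-1..1})"
    using compact_continuous_image compact_imp_bounded assms by blast
  then show ?thesis using that by (force simp add: bounded_iff)
qed

lemma cont_hcos:
  fixes h :: "real \<Rightarrow> real" and f :: "real \<Rightarrow> real"
  assumes h: "continuous_on {-1..1} h" and f: "continuous_on UNIV f"
  shows "continuous_on UNIV (\<lambda>x. h (cos (f x)))"
  by (rule continuous_on_compose2[OF h continuous_on_cos[OF f]]) auto

lemma key_h:
  fixes h :: "real \<Rightarrow> real"
  assumes L: "L > 0" and t: "t > 0" and h: "continuous_on {-1..1} h"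
  shows "(LINT x|lborel. Gs L t u x * h (cos (pi * x / L)) * indicator {0..L} x)
       = (LINT z|lborel. heat_kernel_R t 0 z * h (cos (pi * (u + z) / L)))"
    (is "?A = ?B")
proof (rule ccontr)
  assume ne: "?A \<noteq> ?B"
  define MG where "MG = (LINT x|lborel. \<bar>Gs L t u x\<bar> * indicator {0..L} x)"
  have MG0: "MG \<ge> 0" unfolding MG_def by (intro integral_nonneg_AE) auto
  define D where "D = \<bar>?A - ?B\<bar>"
  define e where "e = D / (2 * (MG + 1))"
  have e: "e > 0" using ne MG0 by (simp add: e_def D_def)
  obtain p where p: "real_polynomial_function p" and pe: "\<And>c. c \<in> {-1..1} \<Longrightarrow> \<bar>h c - p c\<bar> < e"
    using Stone_Weierstrass_real_polynomial_function[OF compact_Icc h e] by blast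
  obtain a N where pa: "p = (\<lambda>x. \<Sum>i\<le>N. a i * x^i)"
    using p real_polynomial_function_iff_sum by blast
  have contp: "continuous_on {-1..1} p" unfolding pa by (intro continuous_intros)
  have c1: "continuous_on UNIV (\<lambda>x. pi * x / L)" "continuous_on UNIV (\<lambda>z. pi * (u + z) / L)"
    using L by (auto intro!: continuous_intros)
  have cosin: "cos y \<in> {-1..1}" for y :: real using abs_cos_le_one[of y] by (auto simp: abs_le_iff)
  let ?Ap = "LINT x|lborel. Gs L t u x * p (cos (pi * x / L)) * indicator {0..L} x"
  let ?Bp = "LINT z|lborel. heat_kernel_R t 0 z * p (cos (pi * (u + z) / L))"
  have ApBp: "?Ap = ?Bp" unfolding pa using poly_eq[OF L t] by simp
  obtain Bh where Bh: "\<And>c. c \<in> {-1..1} \<Longrightarrow> \<bar>h c\<bar> \<le> Bh" using cont_bound[OF h] by blast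
  obtain Bp where Bp: "\<And>c. c \<in> {-1..1} \<Longrightarrow> \<bar>p c\<bar> \<le> Bp" using cont_bound[OF contp] by blast
  have iA: "integrable lborel (\<lambda>x. Gs L t u x * h (cos (pi * x / L)) * indicator {0..L} x)"
    by (rule Gs_int[OF L t cont_hcos[OF h c1(1)]])
  have iAp: "integrable lborel (\<lambda>x. Gs L t u x * p (cos (pi * x / L)) * indicator {0..L} x)"
    by (rule Gs_int[OF L t cont_hcos[OF contp c1(1)]])
  have iB: "integrable lborel (\<lambda>z. heat_kernel_R t 0 z * h (cos (pi * (u + z) / L)))"
    by (rule hk_int[OF t cont_hcos[OF h c1(2)], where B=Bh]) (use Bh cosin in auto)
  have iBp: "integrable lborel (\<lambda>z. heat_kernel_R t 0 z * p (cos (pi * (u + z) / L)))"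
    by (rule hk_int[OF t cont_hcos[OF contp c1(2)], where B=Bp]) (use Bp cosin in auto)
  have iMG: "integrable lborel (\<lambda>x. \<bar>Gs L t u x\<bar> * indicator {0..L} x)"
  proof -
    have "integrable lborel (\<lambda>x. \<bar>Gs L t u x * 1 * indicator {0..L} x\<bar>)"
      by (intro integrable_abs Gs_int[OF L t]) simp
    then show ?thesis by (simp add: abs_mult)
  qed
  have dA: "\<bar>?A - ?Ap\<bar> \<le> e * MG"
  proof -
    have eqA: "?A - ?Ap = (LINT x|lborel. Gs L t u x * h (cos (pi * x / L)) * indicator {0..L} x - Gs L t u x * p (cos (pi * x / L)) * indicator {0..L} x)"
      by (rule Bochner_Integration.integral_diff[OF iA iAp, symmetric])
    have bA: "\<bar>LINT x|lborel. Gs L t u x * h (cos (pi * x / L)) * indicator {0..L} x - Gs L t u x * p (cos (pi * x / L)) * indicator {0..L} x\<bar> \<le> (LINT x|lborel. e * (\<bar>Gs L t u x\<bar> * indicator {0..L} x))"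
    proof (rule integral_abs_bound_integral)
      show "integrable lborel (\<lambda>x. Gs L t u x * h (cos (pi * x / L)) * indicator {0..L} x - Gs L t u x * p (cos (pi * x / L)) * indicator {0..L} x)"
        by (rule Bochner_Integration.integrable_diff[OF iA iAp])
      show "integrable lborel (\<lambda>x. e * (\<bar>Gs L t u x\<bar> * indicator {0..L} x))"
        using iMG by simp
      fix x
      have "\<bar>h (cos (pi * x / L)) - p (cos (pi * x / L))\<bar> \<le> e"
        using pe[OF cosin] less_imp_le by blast
      then have "\<bar>Gs L t u x\<bar> * \<bar>h (cos (pi * x / L)) - p (cos (pi * x / L))\<bar> \<le> \<bar>Gs L t u x\<bar> * e"
        by (intro mult_left_mono) auto
      then show "\<bar>Gs L t u x * h (cos (pi * x / L)) * indicator {0..L} x - Gs L t u x * p (cos (pi * x / L)) * indicator {0..L} x\<bar>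
          \<le> e * (\<bar>Gs L t u x\<bar> * indicator {0..L} x)"
      proof -
        have "Gs L t u x * h (cos (pi * x / L)) * indicator {0..L} x - Gs L t u x * p (cos (pi * x / L)) * indicator {0..L} x
          = (Gs L t u x * (h (cos (pi * x / L)) - p (cos (pi * x / L)))) * indicator {0..L} x"
          by (simp add: algebra_simps)
        moreover have "\<bar>(Gs L t u x * (h (cos (pi * x / L)) - p (cos (pi * x / L)))) * indicator {0..L} x\<bar>
          \<le> e * (\<bar>Gs L t u x\<bar> * indicator {0..L} x)"
          using \<open>\<bar>Gs L t u x\<bar> * \<bar>h (cos (pi * x / L)) - p (cos (pi * x / L))\<bar> \<le> \<bar>Gs L t u x\<bar> * e\<close>
          by (cases "x \<in> {0..L}") (simp_all add: abs_mult mult.commute[of e])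
        ultimately show ?thesis by metis
      qed
    qed
    have eMG: "(LINT x|lborel. e * (\<bar>Gs L t u x\<bar> * indicator {0..L} x)) = e * MG" unfolding MG_def by (rule integral_mult_right_zero)
    show ?thesis unfolding eqA using bA eMG by linarith
  qed
  have dB: "\<bar>?B - ?Bp\<bar> \<le> e"
  proof -
    have eqB: "?B - ?Bp = (LINT z|lborel. heat_kernel_R t 0 z * h (cos (pi * (u + z) / L)) - heat_kernel_R t 0 z * p (cos (pi * (u + z) / L)))"
      by (rule Bochner_Integration.integral_diff[OF iB iBp, symmetric])
    have bB: "\<bar>LINT z|lborel. heat_kernel_R t 0 z * h (cos (pi * (u + z) / L)) - heat_kernel_R t 0 z * p (cos (pi * (u + z) / L))\<bar> \<le> (LINT z|lborel. e * heat_kernel_R t 0 z)"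
    proof (rule integral_abs_bound_integral)
      show "integrable lborel (\<lambda>z. heat_kernel_R t 0 z * h (cos (pi * (u + z) / L)) - heat_kernel_R t 0 z * p (cos (pi * (u + z) / L)))"
        by (rule Bochner_Integration.integrable_diff[OF iB iBp])
      show "integrable lborel (\<lambda>z. e * heat_kernel_R t 0 z)"
        using t by (simp add: hk_normal)
      fix z
      have hk0: "0 \<le> heat_kernel_R t 0 z" using hk_nonneg[of t 0 z] t by auto
      have "\<bar>h (cos (pi * (u + z) / L)) - p (cos (pi * (u + z) / L))\<bar> \<le> e"
        using pe[OF cosin] less_imp_le by blast
      then have "heat_kernel_R t 0 z * \<bar>h (cos (pi * (u + z) / L)) - p (cos (pi * (u + z) / L))\<bar> \<le> heat_kernel_R t 0 z * e"
        by (intro mult_left_mono hk0)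
      then show "\<bar>heat_kernel_R t 0 z * h (cos (pi * (u + z) / L)) - heat_kernel_R t 0 z * p (cos (pi * (u + z) / L))\<bar>
          \<le> e * heat_kernel_R t 0 z"
      proof -
        have "heat_kernel_R t 0 z * h (cos (pi * (u + z) / L)) - heat_kernel_R t 0 z * p (cos (pi * (u + z) / L))
           = heat_kernel_R t 0 z * (h (cos (pi * (u + z) / L)) - p (cos (pi * (u + z) / L)))"
          by (simp add: algebra_simps)
        then show ?thesis
          using hk0 \<open>heat_kernel_R t 0 z * \<bar>h (cos (pi * (u + z) / L)) - p (cos (pi * (u + z) / L))\<bar> \<le> heat_kernel_R t 0 z * e\<close>
          by (simp add: abs_mult mult.commute[of e])
      qed
    qed
    have eB: "(LINT z|lborel. e * heat_kernel_R t 0 z) = e" using t by (simp add: hk_normal)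
    show ?thesis unfolding eqB using bB eB by linarith
  qed
  have "D \<le> e * MG + e"
    unfolding D_def using dA dB ApBp by linarith
  moreover have "e * MG + e = D / 2"
  proof -
    have "e * MG + e = D / (2 * (MG + 1)) * (MG + 1)" by (simp add: e_def distrib_left)
    also have "\<dots> = D / 2" using MG0 by (simp add: field_simps)
    finally show ?thesis .
  qed
  moreover have "D > 0" using ne by (simp add: D_def)
  ultimately show False by linarith
qed

lemma zero_integral_cont:
  fixes f :: "real \<Rightarrow> real"
  assumes L: "L > 0" and f: "continuous_on UNIV f" and nn: "\<And>x. f x \<ge> 0"
    and z: "(LINT x|lborel. f x * indicator {0..L} x) = 0"
    and x: "x \<in> {0..L}"
  shows "f x = 0"
proof -
  have si: "set_integrable lborel {0..L} f"
    by (rule borel_integrable_atLeastAtMost') (rule continuous_on_subset[OF f], simp)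
  have "(LINT x:{0..L}|lborel. f x) = 0"
    using z unfolding set_lebesgue_integral_def by (simp add: mult.commute)
  then have "integral {0..L} f = 0"
    using set_borel_integral_eq_integral(2)[OF si] by simp
  then have "(f has_integral 0) (cbox 0 L)"
    using set_borel_integral_eq_integral(1)[OF si] by (metis has_integral_integral box_real(2))
  moreover have "continuous_on (cbox 0 L) f" using continuous_on_subset[OF f] by blast
  moreover have "box 0 L \<noteq> {}" using L by (simp add: box_real)
  moreover have "x \<in> cbox 0 L" using x by (simp add: box_real)
  ultimately show ?thesis
    using has_integral_0_cbox_imp_0[of 0 L f x] nn by blast
qed

lemma key_ineq:
  assumes L: "L > 0" and t: "t > 0" and x0: "x0 \<in> {0..L}"
  shows "heat_kernel_R t 0 (x0 - u) \<le> Gs L t u x0"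
proof -
  define D where "D x = Gs L t u x - heat_kernel_R t 0 (x - u)" for x
  have contD: "continuous_on UNIV D"
    unfolding D_def[abs_def] heat_kernel_R_def
    using t by (intro continuous_intros continuous_Gs[OF L t]) auto
  define h where "h c = max 0 (- D (L / pi * arccos c))" for c
  have conth: "continuous_on {-1..1} h"
    unfolding h_def
    by (intro continuous_intros continuous_on_compose2[OF contD]) auto
  have h0: "h c \<ge> 0" for c by (simp add: h_def)
  have hcos: "h (cos (pi * x / L)) = max 0 (- D x)" if "x \<in> {0..L}" for x
  proof -
    have "arccos (cos (pi * x / L)) = pi * x / L"
      using that L by (intro arccos_cos) (auto simp: field_simps)
    then show ?thesis unfolding h_def using L by simp
  qed
  define N where "N x = max 0 (- D x)" for x
  have contN: "continuous_on UNIV N"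
    unfolding N_def[abs_def] by (intro continuous_intros contD)
  have c1: "continuous_on UNIV (\<lambda>x. pi * x / L)" "continuous_on UNIV (\<lambda>z. pi * (u + z) / L)"
    using L by (auto intro!: continuous_intros)
  have hk0: "heat_kernel_R t 0 z \<ge> 0" for z using hk_nonneg[of t 0 z] t by auto
  obtain Bh where Bh: "\<And>c. c \<in> {-1..1} \<Longrightarrow> \<bar>h c\<bar> \<le> Bh" using cont_bound[OF conth] by blast
  have cosin: "cos y \<in> {-1..1}" for y :: real using abs_cos_le_one[of y] by (auto simp: abs_le_iff)
  have iB: "integrable lborel (\<lambda>z. heat_kernel_R t 0 z * h (cos (pi * (u + z) / L)))"
    by (rule hk_int[OF t cont_hcos[OF conth c1(2)], where B=Bh]) (use Bh cosin in auto)
  have iBr: "integrable lborel (\<lambda>z. heat_kernel_R t 0 z * h (cos (pi * (u + z) / L)) * indicator {0..L} (u + z))"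
  proof (rule Bochner_Integration.integrable_bound[OF iB])
    have m1: "(\<lambda>z. heat_kernel_R t 0 z * h (cos (pi * (u + z) / L))) \<in> borel_measurable lborel"
      using iB by (rule borel_measurable_integrable)
    have m2: "(\<lambda>z. indicator {0..L} (u + z) :: real) \<in> borel_measurable lborel"
      by measurable
    show "(\<lambda>z. heat_kernel_R t 0 z * h (cos (pi * (u + z) / L)) * indicator {0..L} (u + z)) \<in> borel_measurable lborel"
      by (intro borel_measurable_times m1 m2)
  qed (auto simp: indicator_def)
  have "(LINT z|lborel. heat_kernel_R t 0 z * h (cos (pi * (u + z) / L)) * indicator {0..L} (u + z))
      \<le> (LINT z|lborel. heat_kernel_R t 0 z * h (cos (pi * (u + z) / L)))"
    by (intro integral_mono iB iBr) (auto simp: indicator_def hk0 h0)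
  moreover have "(LINT z|lborel. heat_kernel_R t 0 z * h (cos (pi * (u + z) / L)) * indicator {0..L} (u + z))
      = (LINT x|lborel. heat_kernel_R t 0 (x - u) * h (cos (pi * x / L)) * indicator {0..L} x)"
    by (subst lborel_integral_real_affine[where c=1 and t="-u"]) simp_all
  ultimately have ineq: "(LINT x|lborel. heat_kernel_R t 0 (x - u) * h (cos (pi * x / L)) * indicator {0..L} x)
      \<le> (LINT x|lborel. Gs L t u x * h (cos (pi * x / L)) * indicator {0..L} x)"
    using key_h[OF L t conth, of u] by simp
  have iG: "integrable lborel (\<lambda>x. Gs L t u x * h (cos (pi * x / L)) * indicator {0..L} x)"
    by (rule Gs_int[OF L t cont_hcos[OF conth c1(1)]])
  have iH: "integrable lborel (\<lambda>x. heat_kernel_R t 0 (x - u) * h (cos (pi * x / L)) * indicator {0..L} x)"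
    by (intro borel_integrable_atLeastAtMost continuous_on_interior[OF _ interior_UNIV[THEN equalityD2, THEN subsetD]])
       (use t cont_hcos[OF conth c1(1)] in \<open>auto simp: heat_kernel_R_def intro!: continuous_intros\<close>)
  have "0 \<le> (LINT x|lborel. Gs L t u x * h (cos (pi * x / L)) * indicator {0..L} x)
           - (LINT x|lborel. heat_kernel_R t 0 (x - u) * h (cos (pi * x / L)) * indicator {0..L} x)"
    using ineq by simp
  also have "\<dots> = (LINT x|lborel. D x * h (cos (pi * x / L)) * indicator {0..L} x)"
    unfolding D_def by (subst Bochner_Integration.integral_diff[OF iG iH, symmetric]) (simp add: algebra_simps)
  also have "\<dots> = (LINT x|lborel. - ((N x)^2 * indicator {0..L} x))"
  proof (rule Bochner_Integration.integral_cong[OF refl])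
    fix x
    show "D x * h (cos (pi * x / L)) * indicator {0..L} x = - ((N x)^2 * indicator {0..L} x)"
      by (cases "x \<in> {0..L}") (auto simp: hcos N_def power2_eq_square max_def)
  qed
  finally have le: "(LINT x|lborel. (N x)^2 * indicator {0..L} x) \<le> 0" by simp
  have ge: "(LINT x|lborel. (N x)^2 * indicator {0..L} x) \<ge> 0"
    by (intro integral_nonneg_AE) auto
  have "(N x0)^2 = 0"
    by (rule zero_integral_cont[OF L _ _ _ x0, where f="\<lambda>x. (N x)^2"])
       (use le ge in \<open>auto intro!: continuous_intros contN\<close>)
  then have "D x0 \<ge> 0" by (simp add: N_def max_def split: if_splits)
  then show ?thesis by (simp add: D_def)
qed

lemma arctan_diff_lower:
  assumes "0 \<le> a" "a < b"
  shows "(b - a) / (1 + b^2) \<le> arctan b - arctan a"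
proof -
  obtain z where z: "a < z" "z < b" "arctan b - arctan a = (b - a) * inverse (1 + z^2)"
    using MVT2[OF assms(2), of arctan "\<lambda>x. inverse (1 + x^2)"] DERIV_arctan by blast
  have "z^2 \<le> b^2" using z assms by (intro power_mono) auto
  then have "inverse (1 + b^2) \<le> inverse (1 + z^2)"
    by (intro le_imp_inverse_le) (auto simp: add_pos_nonneg)
  then show ?thesis using z assms by (simp add: divide_inverse mult_left_mono)
qed

lemma partial_arctan:
  assumes s: "s > 0"
  shows "(\<Sum>n<N. 1 / (1 + s^2 * (real (Suc n))^2)) \<le> arctan (s * real N) / s"
proof (induction N)
  case 0 then show ?case by simp
next
  case (Suc N)
  have "(s * real (Suc N) - s * real N) / (1 + (s * real (Suc N))^2) \<le> arctan (s * real (Suc N)) - arctan (s * real N)"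
    using s by (intro arctan_diff_lower) (auto simp: algebra_simps)
  moreover have "s * real (Suc N) - s * real N = s" by (simp add: algebra_simps)
  ultimately have "s / (1 + (s * real (Suc N))^2) \<le> arctan (s * real (Suc N)) - arctan (s * real N)" by simp
  then have "1 / (1 + s^2 * (real (Suc N))^2) \<le> (arctan (s * real (Suc N)) - arctan (s * real N)) / s"
    using s by (simp add: field_simps power_mult_distrib del: of_nat_Suc)
  then show ?case using Suc.IH by (simp add: diff_divide_distrib del: of_nat_Suc)
qed

lemma ec_sum_bound:
  assumes L: "L > 0" and t: "t > 0"
  shows "(\<Sum>n. ec L t (Suc n)) \<le> L / (2 * sqrt t)"
proof -
  define s where "s = pi * sqrt t / L"
  have s: "s > 0" using L t by (simp add: s_def)
  have s2: "s^2 = pi^2 * t / L^2" using t by (simp add: s_def power_divide power_mult_distrib)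
  have tm: "ec L t (Suc n) \<le> 1 / (1 + s^2 * (real (Suc n))^2)" for n
  proof -
    have "1 + s^2 * (real (Suc n))^2 \<le> exp (s^2 * (real (Suc n))^2)" by (rule exp_ge_add_one_self)
    then have "1 / exp (s^2 * (real (Suc n))^2) \<le> 1 / (1 + s^2 * (real (Suc n))^2)"
    proof (rule divide_left_mono)
      have "0 < 1 + s^2 * (real (Suc n))^2" by (intro add_pos_nonneg) auto
      then show "0 < exp (s^2 * (real (Suc n))^2) * (1 + s^2 * (real (Suc n))^2)" by simp
    qed (use \<open>1 + s^2 * (real (Suc n))^2 \<le> exp (s^2 * (real (Suc n))^2)\<close> in auto)
    moreover have "ec L t (Suc n) = 1 / exp (s^2 * (real (Suc n))^2)"
      unfolding ec_def s2 by (simp add: exp_minus field_simps del: of_nat_Suc)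
    ultimately show ?thesis by simp
  qed
  have "(\<Sum>n. ec L t (Suc n)) \<le> (pi / 2) / s"
  proof (rule suminf_le_const[OF summable_ec[OF L t]])
    fix N
    have "(\<Sum>n<N. ec L t (Suc n)) \<le> (\<Sum>n<N. 1 / (1 + s^2 * (real (Suc n))^2))"
      by (intro sum_mono tm)
    also have "\<dots> \<le> arctan (s * real N) / s" by (rule partial_arctan[OF s])
    also have "\<dots> \<le> (pi / 2) / s"
      using arctan_ubound[of "s * real N"] s by (intro divide_right_mono) auto
    finally show "(\<Sum>n<N. ec L t (Suc n)) \<le> (pi / 2) / s" .
  qed
  also have "\<dots> = L / (2 * sqrt t)" using L t by (simp add: s_def field_simps)
  finally show ?thesis .
qed

lemma Gs_upper:
  assumes L: "L > 0" and t: "t > 0"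
  shows "\<bar>Gs L t u x\<bar> \<le> 1 / L + 1 / sqrt t"
proof -
  have "2 / L * (\<Sum>n. ec L t (Suc n)) \<le> 2 / L * (L / (2 * sqrt t))"
    using ec_sum_bound[OF L t] L by (intro mult_left_mono) auto
  also have "\<dots> = 1 / sqrt t" using L by simp
  finally show ?thesis using Gs_bound[OF L t, of u x] by simp
qed

lemma Gs_integral_1:
  assumes L: "L > 0" and t: "t > 0"
  shows "(LINT x|lborel. Gs L t u x * indicator {0..L} x) = 1"
  using Gs_coeff[OF L t, of u 0] by (simp add: ec_def)

lemma rat_near:
  fixes s t d :: real
  assumes "0 \<le> s" "s \<le> t" "0 < t" "0 < d"
  shows "\<exists>q\<in>\<rat>. 0 \<le> q \<and> q \<le> t \<and> \<bar>q - s\<bar> < d"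
proof (cases "s < t")
  case True
  obtain q where q: "q \<in> \<rat>" "s < q" "q < min (s + d) t"
    using Rats_dense_in_real[of s "min (s + d) t"] True assms by auto
  then show ?thesis using assms by (intro bexI[of _ q]) auto
next
  case False
  then have st: "s = t" using assms by simp
  obtain q where q: "q \<in> \<rat>" "max (t - d) 0 < q" "q < t"
    using Rats_dense_in_real[of "max (t - d) 0" t] assms by auto
  then show ?thesis using assms st by (intro bexI[of _ q]) auto
qed

lemma exit_time_le_iff:
  fixes B :: "real \<Rightarrow> 'a \<Rightarrow> real"
  assumes I: "open I" and cont: "continuous_on {0..} (\<lambda>s. B s \<omega>)"
  shows "exit_time I B y \<omega> \<le> ereal t \<longleftrightarrow> (\<exists>s\<in>{0..t}. y + B (2 * s) \<omega> \<notin> I)"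
proof
  assume "\<exists>s\<in>{0..t}. y + B (2 * s) \<omega> \<notin> I"
  then obtain s where s: "0 \<le> s" "s \<le> t" "y + B (2 * s) \<omega> \<notin> I" by auto
  have "exit_time I B y \<omega> \<le> ereal s"
    unfolding exit_time_def using s by (intro Inf_lower) auto
  also have "\<dots> \<le> ereal t" using s by simp
  finally show "exit_time I B y \<omega> \<le> ereal t" .
next
  assume le: "exit_time I B y \<omega> \<le> ereal t"
  define S where "S = {s. 0 \<le> s \<and> y + B (2 * s) \<omega> \<notin> I}"
  have eq: "{ereal s | s. 0 \<le> s \<and> y + B (2 * s) \<omega> \<notin> I} = ereal ` S"
    unfolding S_def by auto
  have Sne: "S \<noteq> {}"
  proof
    assume "S = {}"
    then have "exit_time I B y \<omega> = top" unfolding exit_time_def eq by simp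
    then show False using le by (simp add: top_ereal_def)
  qed
  have contf: "continuous_on {0..} (\<lambda>s. y + B (2 * s) \<omega>)"
  proof -
    have "continuous_on {0..} (\<lambda>s. B (2 * s) \<omega>)"
      by (rule continuous_on_compose2[OF cont, of _ "\<lambda>s. 2 * s"]) (auto intro!: continuous_intros)
    then show ?thesis by (intro continuous_intros)
  qed
  have "S = {0..} \<inter> (\<lambda>s. y + B (2 * s) \<omega>) -` (- I)"
    unfolding S_def by auto
  then have Scl: "closed S"
    using continuous_closed_preimage[OF contf] I by (simp add: closed_Compl)
  have bdd: "bdd_below S" unfolding S_def by (intro bdd_belowI[of _ 0]) auto
  have inS: "Inf S \<in> S" by (rule closed_contains_Inf[OF Sne bdd Scl])
  have "ereal (Inf S) = Inf (ereal ` S)" by (rule ereal_Inf'[OF bdd Sne])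
  also have "\<dots> \<le> ereal t" using le unfolding exit_time_def eq .
  finally have "Inf S \<le> t" by simp
  then show "\<exists>s\<in>{0..t}. y + B (2 * s) \<omega> \<notin> I"
    using inS unfolding S_def by auto
qed

lemma exists_meas:
  fixes B :: "real \<Rightarrow> 'a \<Rightarrow> real" and h :: "real \<Rightarrow> real"
  assumes meas: "\<And>s. B s \<in> borel_measurable M"
    and cont: "\<And>\<omega>. \<omega> \<in> space M \<Longrightarrow> continuous_on {0..} (\<lambda>s. B s \<omega>)"
    and h: "continuous_on UNIV h"
    and t: "t > 0"
  shows "{\<omega> \<in> space M. \<exists>s\<in>{0..t}. 0 \<le> h (B (2 * s) \<omega>)} \<in> sets M"
proof -
  define Q where "Q = \<rat> \<inter> {0..t}"
  define A where "A m q = {\<omega> \<in> space M. - inverse (real (Suc m)) < h (B (2 * q) \<omega>)}" for m q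
  have Ameas: "A m q \<in> sets M" for m q
  proof -
    have [measurable]: "B (2 * q) \<in> borel_measurable M" by (rule meas)
    have [measurable]: "h \<in> borel_measurable borel" using h by (rule borel_measurable_continuous_onI)
    show ?thesis unfolding A_def by measurable
  qed
  have cQ: "countable Q" unfolding Q_def by (rule countable_subset[OF _ countable_rat]) auto
  have contF: "continuous_on {0..t} (\<lambda>s. h (B (2 * s) \<omega>))" if "\<omega> \<in> space M" for \<omega>
  proof -
    have "continuous_on {0..t} (\<lambda>s. B (2 * s) \<omega>)"
      by (rule continuous_on_compose2[OF cont[OF that], of _ "\<lambda>s. 2 * s"]) (auto intro!: continuous_intros)
    then show ?thesis by (rule continuous_on_compose2[OF h]) auto
  qed
  have eq: "{\<omega> \<in> space M. \<exists>s\<in>{0..t}. 0 \<le> h (B (2 * s) \<omega>)} = (\<Inter>m. \<Union>q\<in>Q. A m q)"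
  proof (intro equalityI subsetI)
    fix \<omega> assume "\<omega> \<in> {\<omega> \<in> space M. \<exists>s\<in>{0..t}. 0 \<le> h (B (2 * s) \<omega>)}"
    then obtain s where om: "\<omega> \<in> space M" and s: "s \<in> {0..t}" "0 \<le> h (B (2 * s) \<omega>)" by auto
    show "\<omega> \<in> (\<Inter>m. \<Union>q\<in>Q. A m q)"
    proof
      fix m
      have "inverse (real (Suc m)) > 0" by simp
      then obtain d where d: "d > 0" and dd: "\<And>s'. s' \<in> {0..t} \<Longrightarrow> dist s' s < d \<Longrightarrow>
          dist (h (B (2 * s') \<omega>)) (h (B (2 * s) \<omega>)) < inverse (real (Suc m))"
        using contF[OF om] s(1) unfolding continuous_on_iff by metis
      obtain q where q: "q \<in> \<rat>" "0 \<le> q" "q \<le> t" "\<bar>q - s\<bar> < d"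
        using rat_near[of s t d] s t d by auto
      have "dist (h (B (2 * q) \<omega>)) (h (B (2 * s) \<omega>)) < inverse (real (Suc m))"
        using dd[of q] q by (auto simp: dist_real_def)
      then have "- inverse (real (Suc m)) < h (B (2 * q) \<omega>)"
        using s(2) by (auto simp: dist_real_def)
      then show "\<omega> \<in> (\<Union>q\<in>Q. A m q)"
        using q om unfolding A_def Q_def by auto
    qed
  next
    fix \<omega> assume om: "\<omega> \<in> (\<Inter>m. \<Union>q\<in>Q. A m q)"
    then have "\<forall>m. \<exists>q. q \<in> Q \<and> \<omega> \<in> A m q" by auto
    then obtain qq where qq: "\<And>m. qq m \<in> Q" "\<And>m. \<omega> \<in> A m (qq m)" by metis
    have oms: "\<omega> \<in> space M" using qq(2)[of 0] unfolding A_def by auto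
    have "seq_compact {0..t}" by (rule compact_imp_seq_compact) simp
    moreover have "\<forall>n. qq n \<in> {0..t}" using qq(1) unfolding Q_def by auto
    ultimately obtain l r where l: "l \<in> {0..t}" and r: "strict_mono r" and lim: "(qq \<circ> r) \<longlonglongrightarrow> l"
      by (rule seq_compactE)
    have lim2: "(\<lambda>n. h (B (2 * (qq \<circ> r) n) \<omega>)) \<longlonglongrightarrow> h (B (2 * l) \<omega>)"
      by (rule continuous_on_tendsto_compose[OF contF[OF oms] lim l])
         (use \<open>\<forall>n. qq n \<in> {0..t}\<close> in auto)
    have lb: "- inverse (real (Suc n)) \<le> h (B (2 * (qq \<circ> r) n) \<omega>)" for n
    proof -
      have "- inverse (real (Suc (r n))) < h (B (2 * (qq \<circ> r) n) \<omega>)"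
        using qq(2)[of "r n"] unfolding A_def by auto
      moreover have "inverse (real (Suc (r n))) \<le> inverse (real (Suc n))"
        using seq_suble[OF r, of n] by (intro le_imp_inverse_le) auto
      ultimately show ?thesis by linarith
    qed
    have "0 \<le> h (B (2 * l) \<omega>)"
    proof (rule LIMSEQ_le[OF _ lim2])
      show "(\<lambda>n. - inverse (real (Suc n))) \<longlonglongrightarrow> 0"
        using tendsto_minus[OF LIMSEQ_inverse_real_of_nat] by simp
      show "\<exists>N. \<forall>n\<ge>N. - inverse (real (Suc n)) \<le> h (B (2 * (qq \<circ> r) n) \<omega>)"
        using lb by auto
    qed
    then show "\<omega> \<in> {\<omega> \<in> space M. \<exists>s\<in>{0..t}. 0 \<le> h (B (2 * s) \<omega>)}"
      using oms l by auto
  qed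
  have U: "(\<Union>q\<in>Q. A m q) \<in> sets M" for m
    by (rule sets.countable_UN'[OF cQ]) (auto simp: Ameas)
  show ?thesis
    unfolding eq
    by (rule sets.countable_INT') (auto simp: U)
qed

lemma hk_shift: "heat_kernel_R t y \<eta> = heat_kernel_R t 0 (\<eta> - y)"
  unfolding heat_kernel_R_def by (simp add: power2_commute)

lemma hk_normal_y: "t > 0 \<Longrightarrow> heat_kernel_R t y \<eta> = normal_density y (sqrt (2 * t)) \<eta>"
  unfolding heat_kernel_R_def normal_density_def
  by (simp add: real_sqrt_mult field_simps power2_commute)

lemma hk_le:
  assumes t: "t > 0"
  shows "heat_kernel_R t y \<eta> \<le> 1 / sqrt t"
proof -
  have "exp (- ((y - \<eta>)^2) / (4 * t)) \<le> 1" using t by simp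
  moreover have "sqrt t \<le> sqrt (4 * pi * t)"
    using t pi_gt3 by (intro real_sqrt_le_mono) auto
  ultimately have "exp (- ((y - \<eta>)^2) / (4 * t)) / sqrt (4 * pi * t) \<le> 1 / sqrt t"
    using t by (intro frac_le) auto
  then show ?thesis unfolding heat_kernel_R_def .
qed

lemma neumann_eq:
  assumes "y \<in> {a<..<a+L}"
  shows "neumann_kernel a L t y \<eta> = (if \<eta> \<in> {a<..<a+L} then Gs L t (y - a) (\<eta> - a) else 0)"
  using assms unfolding neumann_kernel_def Gs_def gt_def by simp

lemma analytic:
  fixes a L t T y :: real
  assumes L: "1 \<le> L" and t: "0 < t" "t \<le> T" and y: "y \<in> {a<..<a+L}"
  defines "I \<equiv> {a<..<a+L}"
  defines "\<phi> \<equiv> heat_kernel_R t y"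
  defines "G \<equiv> neumann_kernel a L t y"
  shows "integrable lborel (\<lambda>\<eta>. \<bar>\<phi> \<eta> - G \<eta>\<bar>)"
    and "(LINT \<eta>|lborel. \<bar>\<phi> \<eta> - G \<eta>\<bar>) = 2 * (LINT \<eta>|lborel. indicator (- I) \<eta> * \<phi> \<eta>)"
    and "\<And>\<eta>. \<bar>\<phi> \<eta> - G \<eta>\<bar> \<le> (sqrt T + 1) / sqrt t"
proof -
  have L0: "L > 0" using L by simp
  define u where "u = y - a"
  have Gdef: "G \<eta> = indicator I \<eta> * Gs L t u (\<eta> - a)" for \<eta>
    unfolding G_def neumann_eq[OF y] u_def I_def by (simp add: indicator_def)
  have phi_nn: "0 \<le> \<phi> \<eta>" for \<eta> unfolding \<phi>_def heat_kernel_R_def using t by simp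
  have phi_int: "integrable lborel \<phi>"
    unfolding \<phi>_def hk_normal_y[OF t(1)] using t by (simp add: integrable_normal_density)
  have phi_1: "(LINT \<eta>|lborel. \<phi> \<eta>) = 1"
    unfolding \<phi>_def hk_normal_y[OF t(1)] using t by (simp add: integral_normal_density)
  have GI: "\<phi> \<eta> \<le> G \<eta>" if "\<eta> \<in> I" for \<eta>
  proof -
    have "\<eta> - a \<in> {0..L}" using that unfolding I_def by auto
    from key_ineq[OF L0 t(1) this, of u]
    show ?thesis unfolding Gdef \<phi>_def hk_shift[of t y] u_def using that by simp
  qed
  have G_out: "G \<eta> = 0" if "\<eta> \<notin> I" for \<eta> using that unfolding Gdef by simp
  have G_nn: "0 \<le> G \<eta>" for \<eta> using GI[of \<eta>] G_out[of \<eta>] phi_nn[of \<eta>] by (cases "\<eta> \<in> I") auto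
  have Gs_i: "integrable lborel (\<lambda>x. Gs L t u x * 1 * indicator {0..L} x)"
    by (rule Gs_int[OF L0 t(1)]) simp
  have Gs_i': "integrable lborel (\<lambda>\<eta>. Gs L t u (-a + 1 * \<eta>) * indicator {0..L} (-a + 1 * \<eta>))"
    using lborel_integrable_real_affine[OF Gs_i, of 1 "-a"] by simp
  have G_int: "integrable lborel G"
  proof (rule Bochner_Integration.integrable_bound[OF Gs_i'])
    have m: "(\<lambda>\<eta>. Gs L t u (\<eta> - a)) \<in> borel_measurable borel"
      by (rule borel_measurable_continuous_onI)
         (rule continuous_on_compose2[OF continuous_Gs[OF L0 t(1)]], auto intro!: continuous_intros)
    show "G \<in> borel_measurable lborel"
      unfolding Gdef[abs_def] I_def using m by measurable
    show "AE \<eta> in lborel. norm (G \<eta>) \<le> norm (Gs L t u (-a + 1 * \<eta>) * indicator {0..L} (-a + 1 * \<eta>))"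
      unfolding Gdef I_def by (intro AE_I2) (auto simp: indicator_def abs_mult)
  qed
  have G_1: "(LINT \<eta>|lborel. G \<eta>) = 1"
  proof -
    have "(LINT \<eta>|lborel. G \<eta>) = (LINT \<eta>|lborel. Gs L t u (\<eta> - a) * indicator {a<..<a+L} \<eta>)"
      unfolding Gdef I_def by (simp add: mult.commute)
    also have "\<dots> = \<bar>1\<bar> *\<^sub>R (LINT x|lborel. Gs L t u ((a + 1 * x) - a) * indicator {a<..<a+L} (a + 1 * x))"
      by (rule lborel_integral_real_affine) simp
    also have "\<dots> = (LINT x|lborel. Gs L t u x * indicator {0<..<L} x)"
      by (simp add: indicator_def)
    also have "\<dots> = (LINT x|lborel. Gs L t u x * indicator {0..L} x)"
    proof (rule integral_cong_AE)
      have [measurable]: "Gs L t u \<in> borel_measurable borel"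
        by (rule borel_measurable_continuous_onI[OF continuous_Gs[OF L0 t(1)]])
      show "(\<lambda>x. Gs L t u x * indicator {0<..<L} x) \<in> borel_measurable lborel"
        by measurable
      show "(\<lambda>x. Gs L t u x * indicator {0..L} x) \<in> borel_measurable lborel"
        by measurable
      show "AE x in lborel. Gs L t u x * indicator {0<..<L} x = Gs L t u x * indicator {0..L} x"
        using AE_lborel_singleton[of 0] AE_lborel_singleton[of L]
        by eventually_elim (auto simp: indicator_def)
    qed
    also have "\<dots> = 1" by (rule Gs_integral_1[OF L0 t(1)])
    finally show ?thesis .
  qed
  have dec: "\<bar>\<phi> \<eta> - G \<eta>\<bar> = indicator (- I) \<eta> * \<phi> \<eta> + (G \<eta> - indicator I \<eta> * \<phi> \<eta>)" for \<eta>
    using GI[of \<eta>] G_out[of \<eta>] phi_nn[of \<eta>] by (cases "\<eta> \<in> I") (auto simp: indicator_def)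
  have Im: "I \<in> sets lborel" unfolding I_def by simp
  have Icm: "- I \<in> sets lborel" unfolding I_def by simp
  have i1: "integrable lborel (\<lambda>\<eta>. indicator (- I) \<eta> * \<phi> \<eta>)"
    using integrable_mult_indicator[OF Icm phi_int] by simp
  have i2: "integrable lborel (\<lambda>\<eta>. indicator I \<eta> * \<phi> \<eta>)"
    using integrable_mult_indicator[OF Im phi_int] by simp
  have split1: "(LINT \<eta>|lborel. indicator I \<eta> * \<phi> \<eta>) + (LINT \<eta>|lborel. indicator (- I) \<eta> * \<phi> \<eta>) = 1"
  proof -
    have "(LINT \<eta>|lborel. indicator I \<eta> * \<phi> \<eta>) + (LINT \<eta>|lborel. indicator (- I) \<eta> * \<phi> \<eta>)
       = (LINT \<eta>|lborel. indicator I \<eta> * \<phi> \<eta> + indicator (- I) \<eta> * \<phi> \<eta>)"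
      by (rule Bochner_Integration.integral_add[OF i2 i1, symmetric])
    also have "\<dots> = (LINT \<eta>|lborel. \<phi> \<eta>)"
      by (rule Bochner_Integration.integral_cong) (auto simp: indicator_def)
    finally show ?thesis using phi_1 by simp
  qed
  have iabs: "integrable lborel (\<lambda>\<eta>. indicator (- I) \<eta> * \<phi> \<eta> + (G \<eta> - indicator I \<eta> * \<phi> \<eta>))"
    using i1 i2 G_int by auto
  show "integrable lborel (\<lambda>\<eta>. \<bar>\<phi> \<eta> - G \<eta>\<bar>)"
    unfolding dec by (rule iabs)
  show "(LINT \<eta>|lborel. \<bar>\<phi> \<eta> - G \<eta>\<bar>) = 2 * (LINT \<eta>|lborel. indicator (- I) \<eta> * \<phi> \<eta>)"
  proof -
    have "(LINT \<eta>|lborel. \<bar>\<phi> \<eta> - G \<eta>\<bar>)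
        = (LINT \<eta>|lborel. indicator (- I) \<eta> * \<phi> \<eta>) + ((LINT \<eta>|lborel. G \<eta>) - (LINT \<eta>|lborel. indicator I \<eta> * \<phi> \<eta>))"
      unfolding dec using i1 i2 G_int by simp
    then show ?thesis using G_1 split1 by simp
  qed
  fix \<eta>
  have sT: "1 \<le> sqrt T / sqrt t"
    using t by (simp add: real_sqrt_le_mono)
  have phi_le: "\<phi> \<eta> \<le> (sqrt T + 1) / sqrt t"
  proof -
    have "\<phi> \<eta> \<le> 1 / sqrt t" unfolding \<phi>_def by (rule hk_le[OF t(1)])
    also have "\<dots> \<le> (sqrt T + 1) / sqrt t" using t by (intro divide_right_mono) auto
    finally show ?thesis .
  qed
  have G_le: "G \<eta> \<le> (sqrt T + 1) / sqrt t"
  proof (cases "\<eta> \<in> I")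
    case True
    have "G \<eta> \<le> \<bar>Gs L t u (\<eta> - a)\<bar>" unfolding Gdef using True by simp
    also have "\<dots> \<le> 1 / L + 1 / sqrt t" by (rule Gs_upper[OF L0 t(1)])
    also have "\<dots> \<le> 1 + 1 / sqrt t" using L by simp
    also have "\<dots> \<le> sqrt T / sqrt t + 1 / sqrt t" using sT by simp
    also have "\<dots> = (sqrt T + 1) / sqrt t" by (simp add: add_divide_distrib)
    finally show ?thesis .
  next
    case False
    then show ?thesis using G_out[of \<eta>] t by simp
  qed
  show "\<bar>\<phi> \<eta> - G \<eta>\<bar> \<le> (sqrt T + 1) / sqrt t"
    using phi_le G_le phi_nn[of \<eta>] G_nn[of \<eta>] by linarith
qed

lemma outside_iff:
  fixes a b w :: real
  assumes "a < b"
  shows "w \<notin> {a<..<b} \<longleftrightarrow> 0 \<le> (w - a) * (w - b)"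
  using assms by (auto simp: zero_le_mult_iff)

lemma powr_mhalf: "t > 0 \<Longrightarrow> t powr (-1/2) = 1 / sqrt (t::real)"
  by (simp add: powr_minus_divide powr_half_sqrt)

lemma prob_part:
  fixes M :: "'a measure" and B :: "real \<Rightarrow> 'a \<Rightarrow> real"
  assumes BM: "std_brownian_motion M B" and t: "t > 0" and ab: "a < b"
  shows "(LINT \<eta>|lborel. indicator (- {a<..<b}) \<eta> * heat_kernel_R t y \<eta>)
           \<le> measure M {\<omega> \<in> space M. exit_time {a<..<b} B y \<omega> \<le> ereal t}"
proof -
  define I where "I = {a<..<b}"
  have ps: "prob_space M" and meas: "\<And>s. B s \<in> borel_measurable M"
    and B0: "\<And>\<omega>. \<omega> \<in> space M \<Longrightarrow> B 0 \<omega> = 0"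
    and cont: "\<And>\<omega>. \<omega> \<in> space M \<Longrightarrow> continuous_on {0..} (\<lambda>s. B s \<omega>)"
    using BM t unfolding std_brownian_motion_def by auto
  have D: "\<forall>s t. 0 \<le> s \<and> s < t \<longrightarrow> distributed M lborel (\<lambda>\<omega>. B t \<omega> - B s \<omega>) (normal_density 0 (sqrt (t - s)))"
    using BM unfolding std_brownian_motion_def by blast
  have dist: "distributed M lborel (\<lambda>\<omega>. B (2 * t) \<omega> - B 0 \<omega>) (normal_density 0 (sqrt (2 * t - 0)))"
    using D[rule_format, of 0 "2 * t"] t by simp
  interpret prob_space M by (rule ps)
  define A where "A = {z::real. y + z \<notin> I}"
  have Am: "A \<in> sets lborel" unfolding A_def I_def by measurable
  define Eout where "Eout = {\<omega> \<in> space M. y + B (2 * t) \<omega> \<notin> I}"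
  define Eex where "Eex = {\<omega> \<in> space M. exit_time I B y \<omega> \<le> ereal t}"
  have Eout_eq: "Eout = (\<lambda>\<omega>. B (2 * t) \<omega> - B 0 \<omega>) -` A \<inter> space M"
    unfolding Eout_def A_def using B0 by auto
  define nd where "nd = normal_density 0 (sqrt (2 * t))"
  have nd_int: "integrable lborel (\<lambda>z. nd z * indicator A z)"
  proof -
    have "integrable lborel (\<lambda>z. indicator A z *\<^sub>R nd z)"
      by (rule integrable_mult_indicator[OF Am]) (use t in \<open>simp add: nd_def integrable_normal_density\<close>)
    then show ?thesis by (simp add: mult.commute)
  qed
  have "emeasure M Eout = (\<integral>\<^sup>+ z. ennreal (nd z) * indicator A z \<partial>lborel)"
    unfolding Eout_eq using distributed_emeasure[OF dist Am] unfolding nd_def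
    by (simp add: mult.commute)
  also have "\<dots> = (\<integral>\<^sup>+ z. ennreal (nd z * indicator A z) \<partial>lborel)"
    by (intro nn_integral_cong) (auto simp: indicator_def)
  also have "\<dots> = ennreal (LINT z|lborel. nd z * indicator A z)"
    by (rule nn_integral_eq_integral[OF nd_int]) (auto simp: nd_def normal_density_nonneg)
  finally have em: "emeasure M Eout = ennreal (LINT z|lborel. nd z * indicator A z)" .
  have tr: "(LINT z|lborel. nd z * indicator A z) = (LINT \<eta>|lborel. indicator (- I) \<eta> * heat_kernel_R t y \<eta>)"
  proof -
    have "(LINT z|lborel. nd z * indicator A z) = \<bar>1\<bar> *\<^sub>R (LINT \<eta>|lborel. nd (-y + 1 * \<eta>) * indicator A (-y + 1 * \<eta>))"
      by (rule lborel_integral_real_affine) simp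
    also have "\<dots> = (LINT \<eta>|lborel. indicator (- I) \<eta> * heat_kernel_R t y \<eta>)"
    proof -
      have "nd (-y + 1 * \<eta>) * indicator A (-y + 1 * \<eta>) = indicator (- I) \<eta> * heat_kernel_R t y \<eta>" for \<eta>
        unfolding nd_def A_def hk_shift[of t y] hk_normal[OF t] by (simp add: indicator_def)
      then show ?thesis by simp
    qed
    finally show ?thesis .
  qed
  have Pout: "measure M Eout = (LINT \<eta>|lborel. indicator (- I) \<eta> * heat_kernel_R t y \<eta>)"
  proof -
    have "0 \<le> (LINT z|lborel. nd z * indicator A z)"
      by (intro integral_nonneg_AE) (auto simp: nd_def normal_density_nonneg)
    then show ?thesis using em tr unfolding measure_def by simp
  qed
  define hh where "hh x = (y + x - a) * (y + x - b)" for x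
  have Eex_eq: "Eex = {\<omega> \<in> space M. \<exists>s\<in>{0..t}. 0 \<le> hh (B (2 * s) \<omega>)}"
  proof -
    have "exit_time I B y \<omega> \<le> ereal t \<longleftrightarrow> (\<exists>s\<in>{0..t}. 0 \<le> hh (B (2 * s) \<omega>))" if "\<omega> \<in> space M" for \<omega>
    proof -
      have "open I" unfolding I_def by simp
      from exit_time_le_iff[of I B \<omega> y t, OF this cont[OF that]]
      show ?thesis unfolding hh_def I_def using outside_iff[OF ab] by (simp add: algebra_simps)
    qed
    then show ?thesis unfolding Eex_def by auto
  qed
  have Eex_m: "Eex \<in> sets M"
    unfolding Eex_eq
    by (rule exists_meas[OF meas cont _ t]) (auto simp: hh_def intro!: continuous_intros)
  have sub: "Eout \<subseteq> Eex"
  proof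
    fix \<omega> assume "\<omega> \<in> Eout"
    then have om: "\<omega> \<in> space M" and o: "y + B (2 * t) \<omega> \<notin> I" unfolding Eout_def by auto
    have "\<exists>s\<in>{0..t}. y + B (2 * s) \<omega> \<notin> I" using o t by (intro bexI[of _ t]) auto
    moreover have "open I" unfolding I_def by simp
    ultimately have "exit_time I B y \<omega> \<le> ereal t"
      using exit_time_le_iff[of I B \<omega> y t, OF _ cont[OF om]] by simp
    then show "\<omega> \<in> Eex" unfolding Eex_def using om by simp
  qed
  have "measure M Eout \<le> measure M Eex"
    by (rule finite_measure_mono[OF sub Eex_m])
  then show ?thesis using Pout unfolding Eex_def I_def by simp
qed

theorem mainTheorem15:
  fixes T :: real
  assumes "T > 0"
  shows "\<exists>C>0. \<forall>(alpha::real) (lam::real) (t::real) (y::real) (M::'a measure) B.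
     alpha < 0 \<and> 0 < alpha + 1 \<and> 1 \<le> lam \<and> 0 < t \<and> t \<le> T \<and>
     y \<in> scaled_interval alpha lam \<and> std_brownian_motion M B \<longrightarrow>
     (let I = scaled_interval alpha lam;
          G = neumann_kernel (lam * alpha) lam t y;
          p = measure M {\<omega> \<in> space M. exit_time I B y \<omega> \<le> ereal t} in
      (\<integral>\<^sup>+ \<eta>. ennreal \<bar>heat_kernel_R t y \<eta> - G \<eta>\<bar> \<partial>lborel) \<le> ennreal (2 * p) \<and>
      (\<integral>\<^sup>+ \<eta>. ennreal ((heat_kernel_R t y \<eta> - G \<eta>)^2) \<partial>lborel)
         \<le> ennreal (C * t powr (-1/2) * p))"
proof (intro exI[of _ "2 * (sqrt T + 1)"] conjI allI impI)
  show "0 < 2 * (sqrt T + 1)" using assms by (simp add: add_pos_nonneg)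
  fix alpha lam t y :: real and M :: "'a measure" and B
  assume H: "alpha < 0 \<and> 0 < alpha + 1 \<and> 1 \<le> lam \<and> 0 < t \<and> t \<le> T \<and>
     y \<in> scaled_interval alpha lam \<and> std_brownian_motion M B"
  define a where "a = lam * alpha"
  define L where "L = lam"
  have L: "1 \<le> L" and t: "0 < t" "t \<le> T" and BM: "std_brownian_motion M B"
    using H by (auto simp: L_def)
  have Ieq: "scaled_interval alpha lam = {a<..<a+L}" unfolding scaled_interval_def a_def L_def by simp
  have y: "y \<in> {a<..<a+L}" using H Ieq by simp
  define \<phi> where "\<phi> = heat_kernel_R t y"
  define G where "G = neumann_kernel a L t y"
  define p where "p = measure M {\<omega> \<in> space M. exit_time {a<..<a+L} B y \<omega> \<le> ereal t}"
  define Pout where "Pout = (LINT \<eta>|lborel. indicator (- {a<..<a+L}) \<eta> * heat_kernel_R t y \<eta>)"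
  note an = analytic[OF L t y]
  have int: "integrable lborel (\<lambda>\<eta>. \<bar>\<phi> \<eta> - G \<eta>\<bar>)" using an(1) unfolding \<phi>_def G_def .
  have I2: "(LINT \<eta>|lborel. \<bar>\<phi> \<eta> - G \<eta>\<bar>) = 2 * Pout" using an(2) unfolding \<phi>_def G_def Pout_def .
  have bd: "\<bar>\<phi> \<eta> - G \<eta>\<bar> \<le> (sqrt T + 1) / sqrt t" for \<eta> using an(3) unfolding \<phi>_def G_def .
  have Pp: "Pout \<le> p"
    unfolding Pout_def p_def using prob_part[OF BM t(1), of a "a + L" y] L by simp
  have first: "(\<integral>\<^sup>+ \<eta>. ennreal \<bar>\<phi> \<eta> - G \<eta>\<bar> \<partial>lborel) \<le> ennreal (2 * p)"
  proof -
    have "(\<integral>\<^sup>+ \<eta>. ennreal \<bar>\<phi> \<eta> - G \<eta>\<bar> \<partial>lborel) = ennreal (LINT \<eta>|lborel. \<bar>\<phi> \<eta> - G \<eta>\<bar>)"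
      by (rule nn_integral_eq_integral[OF int]) auto
    also have "\<dots> \<le> ennreal (2 * p)" using I2 Pp by (intro ennreal_leI) simp
    finally show ?thesis .
  qed
  define K where "K = (sqrt T + 1) / sqrt t"
  have K0: "0 \<le> K" unfolding K_def using t by simp
  have second: "(\<integral>\<^sup>+ \<eta>. ennreal ((\<phi> \<eta> - G \<eta>)^2) \<partial>lborel) \<le> ennreal (2 * (sqrt T + 1) * t powr (-1/2) * p)"
  proof -
    have "(\<integral>\<^sup>+ \<eta>. ennreal ((\<phi> \<eta> - G \<eta>)^2) \<partial>lborel) \<le> (\<integral>\<^sup>+ \<eta>. ennreal K * ennreal \<bar>\<phi> \<eta> - G \<eta>\<bar> \<partial>lborel)"
    proof (rule nn_integral_mono)
      fix \<eta>
      have "(\<phi> \<eta> - G \<eta>)^2 = \<bar>\<phi> \<eta> - G \<eta>\<bar> * \<bar>\<phi> \<eta> - G \<eta>\<bar>" by (simp add: power2_eq_square)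
      also have "\<dots> \<le> K * \<bar>\<phi> \<eta> - G \<eta>\<bar>" using bd[of \<eta>] unfolding K_def by (intro mult_right_mono) auto
      finally show "ennreal ((\<phi> \<eta> - G \<eta>)^2) \<le> ennreal K * ennreal \<bar>\<phi> \<eta> - G \<eta>\<bar>"
        using K0 by (simp add: ennreal_mult[symmetric] ennreal_leI)
    qed
    also have "\<dots> = ennreal K * (\<integral>\<^sup>+ \<eta>. ennreal \<bar>\<phi> \<eta> - G \<eta>\<bar> \<partial>lborel)"
      by (rule nn_integral_cmult) (use int in \<open>auto dest: borel_measurable_integrable\<close>)
    also have "\<dots> \<le> ennreal K * ennreal (2 * p)"
      by (intro mult_left_mono first) auto
    also have "\<dots> = ennreal (K * (2 * p))"
      using K0 by (simp add: ennreal_mult p_def)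
    also have "K * (2 * p) = 2 * (sqrt T + 1) * t powr (-1/2) * p"
      unfolding K_def powr_mhalf[OF t(1)] by simp
    finally show ?thesis .
  qed
  show "let I = scaled_interval alpha lam;
          G = neumann_kernel (lam * alpha) lam t y;
          p = measure M {\<omega> \<in> space M. exit_time I B y \<omega> \<le> ereal t} in
      (\<integral>\<^sup>+ \<eta>. ennreal \<bar>heat_kernel_R t y \<eta> - G \<eta>\<bar> \<partial>lborel) \<le> ennreal (2 * p) \<and>
      (\<integral>\<^sup>+ \<eta>. ennreal ((heat_kernel_R t y \<eta> - G \<eta>)^2) \<partial>lborel)
         \<le> ennreal (2 * (sqrt T + 1) * t powr (-1/2) * p)"
    unfolding Let_def Ieq using first second unfolding \<phi>_def G_def p_def a_def L_def by simp
qed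

end
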